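(* Let $\mathcal{J}$ be a finite set, $\mathcal{J}_0=\mathcal{J}\cup\{0\}$, $(\Omega,P)$ a Borel probability space and $\mathcal{U}:\Omega\times\mathcal{J}_0\times\mathbb{R}\to\mathbb{R}$ satisfying the regularity and no-indifference assumptions in the context. Assume moreover: (i) for each $\varepsilon\in\Omega$ and $j\in\mathcal{J}$ the map $\delta\mapsto\mathcal{U}_{\varepsilon j}(\delta)$ is invertible; (ii) the random vector $Z_0\in\mathbb{R}^{\mathcal{J}}$ with components $Z_{0j}=\mathcal{U}_{\varepsilon j}^{-1}(\mathcal{U}_{\varepsilon 0}(0))$, $\varepsilon\sim P$, has a non-vanishing density on $\mathbb{R}^{\mathcal{J}}$. Then $\tilde\sigma^{-1}(s)$ has a single element for every $s\in\mathbb{R}^{\mathcal{J}_0}$ with $s_j>0$ for all $j$ and $\sum_j s_j=1$.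
   Context: Regularity: for every $j\in\mathcal{J}_0$ and $\delta\in\mathbb{R}$, $\varepsilon\mapsto\mathcal{U}_{\varepsilon j}(\delta)$ is measurable, and for every $\varepsilon$, $j$, $\delta\mapsto\mathcal{U}_{\varepsilon j}(\delta)$ is increasing and continuous. No indifference: for all distinct $j,j'\in\mathcal{J}_0$ and all $\delta,\delta'$, $P(\mathcal{U}_{\varepsilon j}(\delta)=\mathcal{U}_{\varepsilon j'}(\delta'))=0$. For $\delta\in\mathbb{R}^{\mathcal{J}_0}$, $\sigma_j(\delta)=P(\varepsilon:\mathcal{U}_{\varepsilon j}(\delta_j)\ge\max_{j'\in\mathcal{J}_0}\mathcal{U}_{\varepsilon j'}(\delta_{j'}))$. For $\delta\in\mathbb{R}^{\mathcal{J}}$, $\tilde\sigma(\delta)=\sigma((0,\delta))$ (normalization $\delta_0=0$), and $\tilde\sigma^{-1}(s)=\{\delta\in\mathbb{R}^{\mathcal{J}}:\tilde\sigma(\delta)=s\}$. *)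

theory Defs
  imports "HOL-Probability.Probability"
begin

text \<open>Inside options are indexed by a finite type 'j (the set J); the set
  J0 = J \<union> {0} is modelled by 'j option, with None playing the role of
  the outside option 0.  U eps j d is the utility of option j at mean value d.\<close>

definition share :: "'e measure \<Rightarrow> ('e \<Rightarrow> 'j option \<Rightarrow> real \<Rightarrow> real)
    \<Rightarrow> ('j option \<Rightarrow> real) \<Rightarrow> 'j option \<Rightarrow> real" where
  "share M U \<delta> j = measure M {\<epsilon> \<in> space M. \<forall>j'. U \<epsilon> j' (\<delta> j') \<le> U \<epsilon> j (\<delta> j)}"

definition share_tilde :: "'e measure \<Rightarrow> ('e \<Rightarrow> 'j option \<Rightarrow> real \<Rightarrow> real)
    \<Rightarrow> real^'j \<Rightarrow> 'j option \<Rightarrow> real" where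
  "share_tilde M U \<delta> = share M U (\<lambda>j. case j of None \<Rightarrow> 0 | Some k \<Rightarrow> \<delta> $ k)"

definition share_tilde_inv :: "'e measure \<Rightarrow> ('e \<Rightarrow> 'j option \<Rightarrow> real \<Rightarrow> real)
    \<Rightarrow> ('j option \<Rightarrow> real) \<Rightarrow> (real^'j) set" where
  "share_tilde_inv M U s = {\<delta>. share_tilde M U \<delta> = s}"

end

theory Submission imports Defs begin

lemma finite_argmax: "\<exists>m. \<forall>i. (f::'a::finite \<Rightarrow> real) i \<le> f m"
proof -
  have "Max (range f) \<in> range f" by (intro Max_in) auto
  then obtain m where "f m = Max (range f)" by (metis imageE)
  then show ?thesis by (intro exI[of _ m]) auto
qed

lemma sum_option: "(\<Sum>i\<in>(UNIV::'a::finite option set). g i) = g None + (\<Sum>k\<in>UNIV. g (Some k))"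
  by (simp add: UNIV_option_conv sum.reindex)

locale bdc = prob_space M for M :: "'e measure" +
  fixes U :: "'e \<Rightarrow> ('j::finite) option \<Rightarrow> real \<Rightarrow> real"
  assumes meas: "\<And>j \<delta>. (\<lambda>\<epsilon>. U \<epsilon> j \<delta>) \<in> borel_measurable M"
    and incr: "\<And>\<epsilon> j. mono (U \<epsilon> j)"
    and cont: "\<And>\<epsilon> j. continuous_on UNIV (U \<epsilon> j)"
    and no_indiff: "\<And>j j' \<delta> \<delta>'. j \<noteq> j' \<Longrightarrow>
                     measure M {\<epsilon> \<in> space M. U \<epsilon> j \<delta> = U \<epsilon> j' \<delta>'} = 0"
    and invertible: "\<And>\<epsilon> j. bij (U \<epsilon> (Some j))"
begin

lemma meas'[measurable]: "(\<lambda>\<epsilon>. U \<epsilon> j x) \<in> borel_measurable M"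
  by (rule meas)

definition E where "E d j = {\<epsilon> \<in> space M. \<forall>j'. U \<epsilon> j' (d j') \<le> U \<epsilon> j (d j)}"

lemma E_sets[measurable]: "E d j \<in> sets M"
  unfolding E_def by measurable

lemma share_E: "share M U d j = measure M (E d j)"
  by (simp add: share_def E_def)

lemma monoU: "x \<le> y \<Longrightarrow> U e j x \<le> U e j y"
  using incr by (auto simp: mono_def)

lemma strictU: "x < y \<Longrightarrow> U e (Some j) x < U e (Some j) y"
  using monoU[of x y e "Some j"] invertible[of e j]
  by (metis bij_is_inj injD order_less_le)

lemma E_mono: "d j \<le> d' j \<Longrightarrow> (\<And>i. i \<noteq> j \<Longrightarrow> d' i \<le> d i) \<Longrightarrow> E d j \<subseteq> E d' j"
proof
  fix e assume A: "d j \<le> d' j" "\<And>i. i \<noteq> j \<Longrightarrow> d' i \<le> d i" and e: "e \<in> E d j"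
  show "e \<in> E d' j"
    unfolding E_def
  proof (intro CollectI conjI allI)
    show "e \<in> space M" using e by (simp add: E_def)
    fix j'
    show "U e j' (d' j') \<le> U e j (d' j)"
    proof (cases "j' = j")
      case False
      have "U e j' (d' j') \<le> U e j' (d j')" using A(2)[OF False] by (rule monoU)
      also have "\<dots> \<le> U e j (d j)" using e by (simp add: E_def)
      also have "\<dots> \<le> U e j (d' j)" using A(1) by (rule monoU)
      finally show ?thesis .
    qed simp
  qed
qed

lemma share_mono: "d j \<le> d' j \<Longrightarrow> (\<And>i. i \<noteq> j \<Longrightarrow> d' i \<le> d i) \<Longrightarrow> share M U d j \<le> share M U d' j"
  unfolding share_E by (intro finite_measure_mono E_mono) auto

lemma tie_null: "i \<noteq> j \<Longrightarrow> {\<epsilon> \<in> space M. U \<epsilon> i x = U \<epsilon> j y} \<in> null_sets M"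
  using no_indiff[of i j x y] by (simp add: null_sets_def emeasure_eq_measure)
  
lemma union_sum: "finite I \<Longrightarrow> measure M (\<Union>i\<in>I. E d i) = (\<Sum>i\<in>I. share M U d i)"
  unfolding share_E
proof (rule measure_UNION_AE)
  show "pairwise (\<lambda>i j. AE x in M. x \<notin> E d i \<or> x \<notin> E d j) I"
  proof (rule pairwiseI)
    fix i j assume "i \<in> I" "j \<in> I" "i \<noteq> j"
    from tie_null[OF \<open>i \<noteq> j\<close>, of "d i" "d j"] show "AE x in M. x \<notin> E d i \<or> x \<notin> E d j"
      by (rule AE_I') (auto simp: E_def intro: antisym)
  qed
qed (auto simp: fmeasurable_eq_sets)

lemma sum_one: "(\<Sum>i\<in>UNIV. share M U d i) = 1"
proof -
  have "(\<Union>i. E d i) = space M"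
  proof
    show "space M \<subseteq> (\<Union>i. E d i)"
    proof
      fix e assume "e \<in> space M"
      obtain m where "\<forall>i. U e i (d i) \<le> U e m (d m)" using finite_argmax[of "\<lambda>i. U e i (d i)"] by blast
      then show "e \<in> (\<Union>i. E d i)" using \<open>e \<in> space M\<close> by (auto simp: E_def)
    qed
  qed (auto simp: E_def)
  then show ?thesis using union_sum[of UNIV d] prob_space by simp
qed


lemma box_pos:
  fixes a b :: "real^'n"
  assumes "\<And>i. a$i < b$i"
  shows "0 < emeasure lborel (box a b)"
proof -
  have "(a + b) /\<^sub>R 2 \<in> box a b" using assms by (auto simp: mem_box_cart field_simps)
  then have ne: "box a b \<noteq> {}" by auto
  then show ?thesis unfolding emeasure_lborel_box_eq
    by (force intro!: prod_pos simp: box_ne_empty algebra_simps)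
qed

lemma inj_aux:
  assumes dist: "distributed M lborel X f" and fpos: "\<forall>z. f z > 0"
    and X_def: "X = (\<lambda>\<epsilon>. \<chi> j. inv (U \<epsilon> (Some j)) (U \<epsilon> None 0))"
    and d0: "d None = 0" and d'0: "d' None = 0"
    and eq: "\<And>i. share M U d i = share M U d' i"
    and k: "d' (Some k) < d (Some k)"
  shows False
proof -
  define S where "S = {i. d i \<le> d' i}"
  define a :: "real^'j" where "a = (\<chi> i. d' (Some i))"
  define b :: "real^'j" where "b = (\<chi> i. if i = k then (d' (Some k) + d (Some k)) / 2 else d' (Some i) + 1)"
  define D where "D = X -` box a b \<inter> space M"
  have Xm: "X \<in> measurable M lborel" and fm: "f \<in> borel_measurable lborel"
    and distr: "distr M lborel X = density lborel f"
    using dist by (auto simp: distributed_def)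
  have Dsets: "D \<in> sets M" unfolding D_def using Xm by (rule measurable_sets) simp
  have ab: "\<And>i. a$i < b$i" using k by (auto simp: a_def b_def)
  have "emeasure M D = emeasure (distr M lborel X) (box a b)"
    unfolding D_def by (rule emeasure_distr[symmetric, OF Xm]) simp
  also have "\<dots> = (\<integral>\<^sup>+ x. f x * indicator (box a b) x \<partial>lborel)"
    unfolding distr by (rule emeasure_density[OF fm]) simp
  finally have emD: "emeasure M D = (\<integral>\<^sup>+ x. f x * indicator (box a b) x \<partial>lborel)" .
  have "emeasure M D \<noteq> 0"
  proof
    assume "emeasure M D = 0"
    then have "AE x in lborel. f x * indicator (box a b) x = 0"
    proof (subst nn_integral_0_iff_AE[symmetric])
      have [measurable]: "f \<in> borel_measurable borel" using fm by simp
      show "(\<lambda>x. f x * indicator (box a b) x) \<in> borel_measurable lborel" by measurable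
      show "(\<integral>\<^sup>+ x. f x * indicator (box a b) x \<partial>lborel) = 0" using emD \<open>emeasure M D = 0\<close> by simp
    qed
    then have "AE x in lborel. x \<notin> box a b"
      by eventually_elim (metis fpos indicator_simps(1) mult.right_neutral order_less_irrefl)
    then have "emeasure lborel (box a b) = 0"
      by (subst (asm) AE_iff_measurable[of "box a b"]) auto
    with box_pos[OF ab] show False by simp
  qed
  then have mD: "measure M D > 0"
    using emeasure_eq_measure[of D] by (simp add: zero_less_measure_iff)
  have Dprop: "\<And>i. U e i (d' i) \<le> U e None 0" "U e None 0 < U e (Some k) (d (Some k))"
    if e: "e \<in> D" for e
  proof -
    define Z where "Z i = inv (U e (Some i)) (U e None 0)" for i
    have UZ: "U e (Some i) (Z i) = U e None 0" for i
      unfolding Z_def using invertible[of e i] by (simp add: bij_def surj_f_inv_f)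
    have Xe: "X e \<in> box a b" using e by (simp add: D_def)
    have XZ: "X e $ i = Z i" for i by (simp add: X_def Z_def)
    have lo: "a$i < Z i" and hi: "Z i < b$i" for i using Xe by (auto simp: mem_box_cart XZ[symmetric])
    show "U e i (d' i) \<le> U e None 0" for i
    proof (cases i)
      case None then show ?thesis using d'0 by simp
    next
      case (Some i')
      have "U e (Some i') (d' (Some i')) \<le> U e (Some i') (Z i')"
        using lo[of i'] by (intro monoU) (simp add: a_def)
      then show ?thesis using Some UZ by simp
    qed
    have "Z k < d (Some k)" using hi[of k] k by (simp add: b_def)
    from strictU[OF this, of e k] show "U e None 0 < U e (Some k) (d (Some k))" using UZ by simp
  qed
  have fin: "finite S" by simp
  have sub1: "(\<Union>i\<in>S. E d i) \<subseteq> (\<Union>i\<in>S. E d' i)"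
  proof
    fix e assume "e \<in> (\<Union>i\<in>S. E d i)"
    then obtain i where iS: "i \<in> S" and ei: "e \<in> E d i" by auto
    obtain m where m: "\<forall>l. U e l (d' l) \<le> U e m (d' m)" using finite_argmax[of "\<lambda>l. U e l (d' l)"] by blast
    have es: "e \<in> space M" using ei by (simp add: E_def)
    show "e \<in> (\<Union>i\<in>S. E d' i)"
    proof (cases "m \<in> S")
      case True then show ?thesis using m es by (auto simp: E_def)
    next
      case False
      have "U e m (d' m) \<le> U e m (d m)" using False by (intro monoU) (simp add: S_def)
      also have "\<dots> \<le> U e i (d i)" using ei by (simp add: E_def)
      also have "\<dots> \<le> U e i (d' i)" using iS by (intro monoU) (simp add: S_def)
      finally have "e \<in> E d' i" using m es unfolding E_def by (auto intro: order_trans)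
      then show ?thesis using iS by auto
    qed
  qed
  have sub2: "D \<subseteq> (\<Union>i\<in>S. E d' i)"
  proof
    fix e assume e: "e \<in> D"
    then have "e \<in> E d' None" using Dprop(1)[OF e] d'0 by (auto simp: E_def D_def)
    moreover have "None \<in> S" using d0 d'0 by (simp add: S_def)
    ultimately show "e \<in> (\<Union>i\<in>S. E d' i)" by auto
  qed
  have disj: "(\<Union>i\<in>S. E d i) \<inter> D = {}"
  proof (rule ccontr)
    assume "(\<Union>i\<in>S. E d i) \<inter> D \<noteq> {}"
    then obtain e i where iS: "i \<in> S" and ei: "e \<in> E d i" and eD: "e \<in> D" by auto
    have "U e i (d i) \<le> U e i (d' i)" using iS by (intro monoU) (simp add: S_def)
    also have "\<dots> \<le> U e None 0" by (rule Dprop(1)[OF eD])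
    also have "\<dots> < U e (Some k) (d (Some k))" by (rule Dprop(2)[OF eD])
    also have "\<dots> \<le> U e i (d i)" using ei by (simp add: E_def)
    finally show False by simp
  qed
  have "measure M (\<Union>i\<in>S. E d i) + measure M D = measure M ((\<Union>i\<in>S. E d i) \<union> D)"
    using disj Dsets by (intro finite_measure_Union[symmetric]) auto
  also have "\<dots> \<le> measure M (\<Union>i\<in>S. E d' i)"
    using sub1 sub2 by (intro finite_measure_mono) auto
  also have "\<dots> = measure M (\<Union>i\<in>S. E d i)"
    using union_sum[OF fin, of d] union_sum[OF fin, of d'] eq by simp
  finally show False using mD by simp
qed


definition ext :: "real^'j \<Rightarrow> 'j option \<Rightarrow> real" where
  "ext \<delta> = (\<lambda>j. case j of None \<Rightarrow> 0 | Some k \<Rightarrow> \<delta> $ k)"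

lemma ext_simps[simp]: "ext \<delta> None = 0" "ext \<delta> (Some k) = \<delta> $ k"
  by (simp_all add: ext_def)

lemma isC: "isCont (U e j) x"
  by (metis cont continuous_on_eq_continuous_at open_UNIV UNIV_I)

lemma low_bound:
  assumes tpos: "\<forall>j. t j > 0"
  shows "\<exists>x. \<forall>k. share M U (ext (\<chi> i. x)) (Some k) < t (Some k)"
proof -
  define A where "A k n = {\<epsilon>\<in>space M. U \<epsilon> None 0 \<le> U \<epsilon> (Some k) (- real n)}" for k n
  have lim: "(\<lambda>n. measure M (A k n)) \<longlonglongrightarrow> 0" for k
  proof -
    have "(\<lambda>n. measure M (A k n)) \<longlonglongrightarrow> measure M (\<Inter>n. A k n)"
    proof (rule finite_Lim_measure_decseq)
      show "range (A k) \<subseteq> sets M" unfolding A_def by (auto intro!: borel_measurable_le meas)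
      show "decseq (A k)" unfolding decseq_def A_def
        by (auto intro: order_trans[OF _ monoU])
    qed
    moreover have "(\<Inter>n. A k n) = {}"
    proof (rule ccontr)
      assume "(\<Inter>n. A k n) \<noteq> {}"
      then obtain e where e: "\<And>n. e \<in> A k n" by auto
      obtain x where x: "U e (Some k) x = U e None 0 - 1"
        using invertible[of e k] by (metis bij_pointE)
      obtain n where n: "- x \<le> real n" using real_arch_simple by blast
      have "U e None 0 \<le> U e (Some k) (- real n)" using e[of n] by (simp add: A_def)
      also have "\<dots> \<le> U e (Some k) x" using n by (intro monoU) simp
      finally show False using x by simp
    qed
    ultimately show ?thesis by simp
  qed
  then have "\<forall>k. \<forall>\<^sub>F n in sequentially. measure M (A k n) < t (Some k)"
    by (intro allI order_tendstoD(2)[OF lim]) (use tpos in auto)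
  then have "\<forall>\<^sub>F n in sequentially. \<forall>k. measure M (A k n) < t (Some k)"
    by (simp add: eventually_all_finite)
  then obtain n where n: "\<And>k. measure M (A k n) < t (Some k)"
    by (auto simp: eventually_sequentially)
  show ?thesis
  proof (intro exI allI)
    fix k
    have "share M U (ext (\<chi> i. - real n)) (Some k) \<le> measure M (A k n)"
      unfolding share_E
    proof (rule finite_measure_mono)
      show "A k n \<in> sets M" unfolding A_def by measurable
      show "E (ext (\<chi> i. - real n)) (Some k) \<subseteq> A k n"
        unfolding E_def A_def by (auto dest: spec[of _ None])
    qed
    then show "share M U (ext (\<chi> i. - real n)) (Some k) < t (Some k)" using n[of k] by simp
  qed
qed

lemma up_bound:
  assumes tpos: "\<forall>j. t j > 0"
  shows "\<exists>B. \<forall>k. measure M {\<epsilon>\<in>space M. U \<epsilon> (Some k) B \<le> U \<epsilon> None 0} < t None"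
proof -
  define A where "A k n = {\<epsilon>\<in>space M. U \<epsilon> (Some k) (real n) \<le> U \<epsilon> None 0}" for k n
  have lim: "(\<lambda>n. measure M (A k n)) \<longlonglongrightarrow> 0" for k
  proof -
    have "(\<lambda>n. measure M (A k n)) \<longlonglongrightarrow> measure M (\<Inter>n. A k n)"
    proof (rule finite_Lim_measure_decseq)
      show "range (A k) \<subseteq> sets M" unfolding A_def by (auto intro!: borel_measurable_le meas)
      show "decseq (A k)" unfolding decseq_def A_def
        by clarsimp (meson monoU of_nat_le_iff order_trans)
    qed
    moreover have "(\<Inter>n. A k n) = {}"
    proof (rule ccontr)
      assume "(\<Inter>n. A k n) \<noteq> {}"
      then obtain e where e: "\<And>n. e \<in> A k n" by auto
      obtain x where x: "U e (Some k) x = U e None 0 + 1"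
        using invertible[of e k] by (metis bij_pointE)
      obtain n where n: "x \<le> real n" using real_arch_simple by blast
      have "U e (Some k) x \<le> U e (Some k) (real n)" using n by (intro monoU) simp
      also have "\<dots> \<le> U e None 0" using e[of n] by (simp add: A_def)
      finally show False using x by simp
    qed
    ultimately show ?thesis by simp
  qed
  then have "\<forall>k. \<forall>\<^sub>F n in sequentially. measure M (A k n) < t None"
    by (intro allI order_tendstoD(2)[OF lim]) (use tpos in auto)
  then have "\<forall>\<^sub>F n in sequentially. \<forall>k. measure M (A k n) < t None"
    by (simp add: eventually_all_finite)
  then obtain n where n: "\<And>k. measure M (A k n) < t None"
    by (auto simp: eventually_sequentially)
  then show ?thesis unfolding A_def by blast
qed


lemma tend_minus: "(\<lambda>n. U e j (x - inverse (real (Suc n)))) \<longlonglongrightarrow> U e j x"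
proof -
  have "(\<lambda>n. x - inverse (real (Suc n))) \<longlonglongrightarrow> x - 0"
    by (intro tendsto_diff tendsto_const LIMSEQ_inverse_real_of_nat)
  then show ?thesis using isCont_tendsto_compose[OF isC] by simp
qed

lemma tend_plus: "(\<lambda>n. U e j (x + inverse (real (Suc n)))) \<longlonglongrightarrow> U e j x"
proof -
  have "(\<lambda>n. x + inverse (real (Suc n))) \<longlonglongrightarrow> x + 0"
    by (intro tendsto_add tendsto_const LIMSEQ_inverse_real_of_nat)
  then show ?thesis using isCont_tendsto_compose[OF isC] by simp
qed

lemma inv_mono_n: "m \<le> n \<Longrightarrow> inverse (real (Suc n)) \<le> inverse (real (Suc m))"
  by (simp add: le_imp_inverse_le)

lemma share_None: "share M U d None = 1 - (\<Sum>k\<in>UNIV. share M U d (Some k))"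
  using sum_one[of d] by (simp add: sum_option)

lemma exists_sol:
  assumes tpos: "\<forall>j. t j > 0" and tsum: "(\<Sum>j\<in>UNIV. t j) = 1"
  shows "\<exists>\<delta>. share M U (ext \<delta>) = t"
proof -
  define Sub where "Sub = {\<delta>. \<forall>k. share M U (ext \<delta>) (Some k) \<le> t (Some k)}"
  have tNone: "t None = 1 - (\<Sum>k\<in>UNIV. t (Some k))" using tsum by (simp add: sum_option)
  obtain x0 where x0: "\<And>k. share M U (ext (\<chi> i. x0)) (Some k) < t (Some k)"
    using low_bound[OF tpos] by blast
  have x0S: "(\<chi> i. x0) \<in> Sub" using x0 by (auto simp: Sub_def less_imp_le)
  obtain B where B: "\<And>k. measure M {\<epsilon>\<in>space M. U \<epsilon> (Some k) B \<le> U \<epsilon> None 0} < t None"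
    using up_bound[OF tpos] by blast
  have bound: "\<delta> $ k < B" if dS: "\<delta> \<in> Sub" for \<delta> k
  proof (rule ccontr)
    assume "\<not> \<delta> $ k < B"
    then have Bk: "B \<le> \<delta> $ k" by simp
    have "share M U (ext \<delta>) None \<le> measure M {\<epsilon>\<in>space M. U \<epsilon> (Some k) B \<le> U \<epsilon> None 0}"
      unfolding share_E
    proof (rule finite_measure_mono)
      show "{\<epsilon>\<in>space M. U \<epsilon> (Some k) B \<le> U \<epsilon> None 0} \<in> sets M"
        by (auto intro!: borel_measurable_le meas)
      show "E (ext \<delta>) None \<subseteq> {\<epsilon>\<in>space M. U \<epsilon> (Some k) B \<le> U \<epsilon> None 0}"
      proof
        fix e assume e: "e \<in> E (ext \<delta>) None"
        have "U e (Some k) B \<le> U e (Some k) (\<delta> $ k)" using Bk by (rule monoU)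
        also have "\<dots> \<le> U e None 0" using e by (auto simp: E_def dest: spec[of _ "Some k"])
        finally show "e \<in> {\<epsilon>\<in>space M. U \<epsilon> (Some k) B \<le> U \<epsilon> None 0}" using e by (simp add: E_def)
      qed
    qed
    also have "\<dots> < t None" by (rule B)
    also have "t None \<le> share M U (ext \<delta>) None"
      unfolding tNone share_None using dS by (auto simp: Sub_def intro!: sum_mono)
    finally show False by simp
  qed
  define C where "C k = (\<lambda>\<delta>. \<delta> $ k) ` Sub" for k
  have Cne: "C k \<noteq> {}" for k using x0S by (auto simp: C_def)
  have Cbdd: "bdd_above (C k)" for k
    unfolding C_def by (rule bdd_aboveI[of _ B]) (auto dest: bound[of _ k] intro: less_imp_le)
  define \<delta>s where "\<delta>s = (\<chi> k. Sup (C k))"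
  have le: "\<delta> $ k \<le> \<delta>s $ k" if "\<delta> \<in> Sub" for \<delta> k
    unfolding \<delta>s_def using that by (auto simp: C_def intro!: cSup_upper Cbdd[unfolded C_def])
  define ds where "ds = ext \<delta>s"
  have sSub: "\<delta>s \<in> Sub"
    unfolding Sub_def
  proof (intro CollectI allI)
    fix k :: 'j
    define j where "j = Some k"
    define y where "y n = \<delta>s $ k - inverse (real (Suc n))" for n
    define A where "A n = E (ds(j := y n)) j" for n
    have Asets: "range A \<subseteq> sets M" by (auto simp: A_def)
    have Ainc: "incseq A"
      unfolding incseq_def A_def
      by (intro allI impI E_mono) (auto simp: y_def dest: inv_mono_n)
    have Ale: "measure M (A n) \<le> t j" for n
    proof -
      have "y n < Sup (C k)" by (simp add: y_def \<delta>s_def)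
      from less_cSupD[OF Cne this] obtain \<delta>n where dn: "\<delta>n \<in> Sub" "y n < \<delta>n $ k"
        by (auto simp: C_def)
      have "measure M (A n) = share M U (ds(j := y n)) j" by (simp add: A_def share_E)
      also have "\<dots> \<le> share M U (ext \<delta>n) j"
      proof (rule share_mono)
        show "(ds(j := y n)) j \<le> ext \<delta>n j" using dn by (simp add: j_def)
        fix i assume "i \<noteq> j"
        then show "ext \<delta>n i \<le> (ds(j := y n)) i"
          using le[OF dn(1)] by (cases i) (auto simp: ds_def)
      qed
      also have "\<dots> \<le> t j" using dn(1) by (simp add: Sub_def j_def)
      finally show ?thesis .
    qed
    have "(\<lambda>n. measure M (A n)) \<longlonglongrightarrow> measure M (\<Union>n. A n)"
      by (rule finite_Lim_measure_incseq[OF Asets Ainc])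
    then have UA: "measure M (\<Union>n. A n) \<le> t j"
      using Ale by (intro LIMSEQ_le_const2) auto
    define T where "T = (\<Union>i\<in>{i. i \<noteq> j}. {\<epsilon>\<in>space M. U \<epsilon> j (ds j) = U \<epsilon> i (ds i)})"
    have Tsets: "T \<in> sets M" unfolding T_def
      by (intro sets.finite_UN) (auto intro!: borel_measurable_eq meas)
    have "measure M T \<le> (\<Sum>i\<in>{i. i \<noteq> j}. measure M {\<epsilon>\<in>space M. U \<epsilon> j (ds j) = U \<epsilon> i (ds i)})"
      unfolding T_def by (intro measure_UNION_le) (auto intro!: borel_measurable_eq meas)
    also have "\<dots> = 0" by (intro sum.neutral) (auto intro: no_indiff)
    finally have T0: "measure M T \<le> 0" .
    have sub: "E ds j \<subseteq> (\<Union>n. A n) \<union> T"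
    proof
      fix e assume e: "e \<in> E ds j"
      show "e \<in> (\<Union>n. A n) \<union> T"
      proof (cases "e \<in> T")
        case False
        have es: "e \<in> space M" using e by (simp add: E_def)
        have lt: "U e i (ds i) < U e j (ds j)" if "i \<noteq> j" for i
          using e False that es by (force simp: E_def T_def order_less_le)
        have tl: "(\<lambda>n. U e j (y n)) \<longlonglongrightarrow> U e j (ds j)"
          unfolding y_def using tend_minus by (simp add: ds_def j_def)
        have "\<forall>i. \<forall>\<^sub>F n in sequentially. i \<noteq> j \<longrightarrow> U e i (ds i) < U e j (y n)"
        proof
          fix i show "\<forall>\<^sub>F n in sequentially. i \<noteq> j \<longrightarrow> U e i (ds i) < U e j (y n)"
          proof (cases "i = j")
            case False
            show ?thesis using order_tendstoD(1)[OF tl lt[OF False]] by (auto elim: eventually_mono)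
          qed simp
        qed
        then have "\<forall>\<^sub>F n in sequentially. \<forall>i. i \<noteq> j \<longrightarrow> U e i (ds i) < U e j (y n)"
          by (simp add: eventually_all_finite)
        then obtain N where N: "\<And>i. i \<noteq> j \<Longrightarrow> U e i (ds i) < U e j (y N)"
          by (auto simp: eventually_sequentially)
        have "e \<in> A N" unfolding A_def E_def using es N by (auto intro: less_imp_le)
        then show ?thesis by auto
      qed simp
    qed
    have "share M U ds j \<le> measure M ((\<Union>n. A n) \<union> T)"
      unfolding share_E using sub Tsets Asets by (intro finite_measure_mono) auto
    also have "\<dots> \<le> measure M (\<Union>n. A n) + measure M T"
      using Tsets Asets by (intro measure_Un_le) auto
    finally show "share M U (ext \<delta>s) (Some k) \<le> t (Some k)"
      using UA T0 by (simp add: ds_def j_def)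
  qed
  have inside: "share M U ds (Some k) = t (Some k)" for k :: 'j
  proof (rule ccontr)
    assume "share M U ds (Some k) \<noteq> t (Some k)"
    then have lt: "share M U ds (Some k) < t (Some k)" using sSub by (auto simp: Sub_def ds_def order_less_le)
    define j where "j = Some k"
    define y where "y n = \<delta>s $ k + inverse (real (Suc n))" for n
    define A where "A n = E (ds(j := y n)) j" for n
    have Asets: "range A \<subseteq> sets M" by (auto simp: A_def)
    have Adec: "decseq A"
      unfolding decseq_def A_def
      by (intro allI impI E_mono) (auto simp: y_def dest: inv_mono_n)
    have L: "(\<lambda>n. measure M (A n)) \<longlonglongrightarrow> measure M (\<Inter>n. A n)"
      by (rule finite_Lim_measure_decseq[OF Asets Adec])
    have "(\<Inter>n. A n) \<subseteq> E ds j"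
    proof
      fix e assume e: "e \<in> (\<Inter>n. A n)"
      then have es: "e \<in> space M" by (auto simp: A_def E_def)
      have "U e j' (ds j') \<le> U e j (ds j)" for j'
      proof (cases "j' = j")
        case False
        have tl: "(\<lambda>n. U e j (y n)) \<longlonglongrightarrow> U e j (ds j)"
          unfolding y_def using tend_plus by (simp add: ds_def j_def)
        have "U e j' (ds j') \<le> U e j (y n)" for n
          using e False by (auto simp: A_def E_def dest!: spec[of _ j'])
        then show ?thesis by (intro LIMSEQ_le_const[OF tl]) auto
      qed simp
      then show "e \<in> E ds j" using es by (simp add: E_def)
    qed
    then have Q: "measure M (\<Inter>n. A n) \<le> share M U ds j"
      unfolding share_E by (intro finite_measure_mono) auto
    have "\<forall>\<^sub>F n in sequentially. measure M (A n) < t j"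
      by (rule order_tendstoD(2)[OF L]) (use Q lt in \<open>simp add: j_def\<close>)
    then obtain N where N: "measure M (A N) < t j" by (auto simp: eventually_sequentially)
    define \<delta>' where "\<delta>' = (\<chi> i. if i = k then y N else \<delta>s $ i)"
    have ext': "ext \<delta>' = ds(j := y N)"
      by (auto simp: fun_eq_iff \<delta>'_def ds_def j_def ext_def split: option.split)
    have "\<delta>' \<in> Sub"
      unfolding Sub_def
    proof (intro CollectI allI)
      fix k'
      show "share M U (ext \<delta>') (Some k') \<le> t (Some k')"
      proof (cases "k' = k")
        case True
        then show ?thesis using N by (simp add: ext' share_E A_def j_def)
      next
        case False
        have "share M U (ext \<delta>') (Some k') \<le> share M U ds (Some k')"
          unfolding ext'
        proof (rule share_mono)
          show "(ds(j := y N)) (Some k') \<le> ds (Some k')" using False by (simp add: j_def)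
          fix i assume "i \<noteq> Some k'"
          show "ds i \<le> (ds(j := y N)) i" by (simp add: y_def ds_def j_def)
        qed
        also have "\<dots> \<le> t (Some k')" using sSub by (simp add: Sub_def ds_def)
        finally show ?thesis .
      qed
    qed
    from le[OF this, of k] show False by (simp add: \<delta>'_def y_def)
  qed
  have "share M U ds = t"
  proof
    fix i show "share M U ds i = t i"
    proof (cases i)
      case None
      then show ?thesis using inside by (simp add: share_None tNone)
    qed (simp add: inside)
  qed
  then show ?thesis unfolding ds_def by blast
qed

end

theorem theorem4:
  fixes M :: "'e::topological_space measure"
    and U :: "'e \<Rightarrow> ('j::finite) option \<Rightarrow> real \<Rightarrow> real"
  assumes "prob_space M"
    and "sets M = sets borel"
    and meas: "\<And>j \<delta>. (\<lambda>\<epsilon>. U \<epsilon> j \<delta>) \<in> borel_measurable M"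
    and incr: "\<And>\<epsilon> j. mono (U \<epsilon> j)"
    and cont: "\<And>\<epsilon> j. continuous_on UNIV (U \<epsilon> j)"
    and no_indiff: "\<And>j j' \<delta> \<delta>'. j \<noteq> j' \<Longrightarrow>
                     measure M {\<epsilon> \<in> space M. U \<epsilon> j \<delta> = U \<epsilon> j' \<delta>'} = 0"
    and invertible: "\<And>\<epsilon> j. bij (U \<epsilon> (Some j))"
    and density: "\<exists>f. distributed M lborel
                      (\<lambda>\<epsilon>. \<chi> j. inv (U \<epsilon> (Some j)) (U \<epsilon> None 0)) f
                    \<and> (\<forall>z. f z > 0)"
  shows "\<forall>s :: 'j option \<Rightarrow> real. (\<forall>j. s j > 0) \<and> (\<Sum>j\<in>UNIV. s j) = 1
           \<longrightarrow> (\<exists>!\<delta>. \<delta> \<in> share_tilde_inv M U s)"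
proof -
  have "bdc M U"
    by (intro bdc.intro bdc_axioms.intro assms(1) meas incr cont no_indiff invertible) auto
  then interpret bdc M U .
  obtain f where dist: "distributed M lborel (\<lambda>\<epsilon>. \<chi> j. inv (U \<epsilon> (Some j)) (U \<epsilon> None 0)) f"
    and fpos: "\<forall>z. f z > 0" using density by blast
  have st: "share_tilde M U \<delta> = share M U (ext \<delta>)" for \<delta>
    by (simp add: share_tilde_def ext_def)
  show ?thesis
  proof (intro allI impI)
    fix s :: "'j option \<Rightarrow> real"
    assume s: "(\<forall>j. s j > 0) \<and> (\<Sum>j\<in>UNIV. s j) = 1"
    then obtain \<delta> where d: "share M U (ext \<delta>) = s" using exists_sol by blast
    show "\<exists>!\<delta>. \<delta> \<in> share_tilde_inv M U s"
    proof (rule ex1I[of _ \<delta>])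
      show "\<delta> \<in> share_tilde_inv M U s" using d by (simp add: share_tilde_inv_def st)
      fix \<delta>' assume "\<delta>' \<in> share_tilde_inv M U s"
      then have d': "share M U (ext \<delta>') = s" by (simp add: share_tilde_inv_def st)
      show "\<delta>' = \<delta>"
      proof (rule ccontr)
        assume "\<delta>' \<noteq> \<delta>"
        then obtain k where "\<delta>' $ k \<noteq> \<delta> $ k" by (auto simp: vec_eq_iff)
        then consider "\<delta>' $ k < \<delta> $ k" | "\<delta> $ k < \<delta>' $ k" by linarith
        then show False
        proof cases
          case 1
          show False
            by (rule inj_aux[OF dist fpos refl, of "ext \<delta>" "ext \<delta>'" k]) (use d d' 1 in auto)
        next
          case 2
          show False
            by (rule inj_aux[OF dist fpos refl, of "ext \<delta>'" "ext \<delta>" k]) (use d d' 2 in auto)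
        qed
      qed
    qed
  qed
qed

end
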